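(* Let $p$ be a prime and let $n,m,N\in\mathbb{N}$ with $0<n\le m<N/3$. Then $n\mid_p m$ if and only if there exists $\alpha\in\mathbb{F}_p[t]/(t^N)$ such that $$\alpha^p(t^n-t^m)=t^nt^m(1-\alpha^{p-1}) \quad\text{and}\quad \alpha^{3p}\neq 0 \quad\text{in } \mathbb{F}_p[t]/(t^N).$$
   Context: For $n,m\in\mathbb{N}$, $n\mid_p m$ means $m=p^s n$ for some $s\in\mathbb{N}$. *)

theory Defs
  imports "HOL-Computational_Algebra.Computational_Algebra" "HOL-Library.Cardinality"
begin

definition pdvd :: "nat \<Rightarrow> nat \<Rightarrow> nat \<Rightarrow> bool" where
  "pdvd p n m \<longleftrightarrow> (\<exists>s::nat. m = p ^ s * n)"

text \<open>Equality in the quotient ring k[t]/(t^N), on polynomial representatives.\<close>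
definition eq_mod_tN :: "nat \<Rightarrow> 'a::comm_ring_1 poly \<Rightarrow> 'a poly \<Rightarrow> bool" where
  "eq_mod_tN N a b \<longleftrightarrow> [:0, 1:] ^ N dvd (a - b)"

end

theory Submission
  imports Defs "HOL-Number_Theory.Cong"
begin

lemma X_pow: "[:0,1:]^k = (monom 1 k :: 'a::comm_ring_1 poly)"
  by (simp add: monom_altdef)

lemma eqmod_cong: "eq_mod_tN N a b \<longleftrightarrow> [a = b] (mod (monom 1 N :: 'a::field poly))"
  unfolding eq_mod_tN_def cong_iff_dvd_diff X_pow ..

lemma eqmod_coeff: "eq_mod_tN N a b \<longleftrightarrow> (\<forall>j<N. coeff a j = coeff b j)"
  unfolding eq_mod_tN_def X_pow monom_1_dvd_iff' by simp

lemma ofnat_card: "of_nat CARD('a::{finite,field}) = (0::'a)"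
proof -
  have "(\<Sum>x\<in>(UNIV::'a set). x) = (\<Sum>x\<in>UNIV. x + 1)"
    by (rule sum.reindex_bij_witness[of _ "\<lambda>y. y + 1" "\<lambda>y. y - 1"]) auto
  also have "\<dots> = (\<Sum>x\<in>UNIV. x) + of_nat CARD('a)" by (simp add: sum.distrib)
  finally show ?thesis by simp
qed

lemma char_eq:
  assumes "prime p" "CARD('a::{finite,field}) = p"
  shows "CHAR('a) = p"
proof -
  have "CHAR('a) dvd p" using ofnat_card[where 'a='a] assms of_nat_eq_0_iff_char_dvd by metis
  moreover have "CHAR('a) \<noteq> 1" by simp
  ultimately show ?thesis using assms(1) prime_nat_iff by blast
qed

lemma frob_const:
  fixes x :: "'a :: {finite,field}"
  shows   "x ^ card (UNIV :: 'a set) = x"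
proof (cases "x = 0")
  case False
  have "x * (\<Prod>y\<in>UNIV-{0}. x * y) = x * x ^ (card (UNIV :: 'a set) - 1) * \<Prod>(UNIV-{0})"
    by (simp add: prod.distrib mult_ac)
  also have "x * x ^ (card (UNIV :: 'a set) - 1) = x ^ Suc (card (UNIV :: 'a set) - 1)"
    by (subst power_Suc) auto
  also have "Suc (card (UNIV :: 'a set) - 1) = card (UNIV :: 'a set)"
    using finite_UNIV_card_ge_0[where ?'a = 'a] by simp
  also have "(\<Prod>y\<in>UNIV-{0}. x * y) = (\<Prod>y\<in>UNIV-{0}. y)"
    by (rule prod.reindex_bij_witness[of _ "\<lambda>y. y / x" "\<lambda>y. x * y"]) (use False in auto)
  finally show ?thesis
    by simp
qed (use finite_UNIV_card_ge_0[where ?'a = 'a] in auto)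

lemma frob_coeff:
  assumes "prime p" "CARD('a::{finite,field}) = p"
  shows "coeff ((w::'a poly) ^ p) j = (if p dvd j then coeff w (j div p) else 0)"
proof -
  have ch: "CHAR('a poly) = p" using char_eq[OF assms] by simp
  have pp: "prime CHAR('a poly)" using ch assms by simp
  have p0: "p > 0" using assms prime_gt_0_nat by blast
  have "w ^ p = (\<Sum>i\<le>degree w. monom (coeff w i) i) ^ p" by (simp add: poly_as_sum_of_monoms)
  also have "\<dots> = (\<Sum>i\<le>degree w. monom (coeff w i) i ^ p)"
    by (rule freshmans_dream_sum[OF pp ch[symmetric]])
  also have "\<dots> = (\<Sum>i\<le>degree w. monom (coeff w i) (i * p))"
    using frob_const[where 'a='a] assms by (simp add: monom_power)
  finally have wp: "w ^ p = (\<Sum>i\<le>degree w. monom (coeff w i) (i * p))" .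
  have "coeff (w ^ p) j = (\<Sum>i\<le>degree w. if i * p = j then coeff w i else 0)"
    unfolding wp coeff_sum coeff_monom by (rule sum.cong) auto
  also have "\<dots> = (if p dvd j then coeff w (j div p) else 0)"
  proof (cases "p dvd j")
    case True
    have "(\<Sum>i\<le>degree w. if i * p = j then coeff w i else 0) = (\<Sum>i\<le>degree w. if j div p = i then coeff w i else 0)"
      by (rule sum.cong) (use True p0 in auto)
    also have "\<dots> = coeff w (j div p)" by (simp add: sum.delta coeff_eq_0)
    finally show ?thesis using True by simp
  next
    case False
    then show ?thesis by (intro trans[OF sum.neutral]) auto
  qed
  finally show ?thesis .
qed


lemma monom_dvd: "N \<le> k \<Longrightarrow> (monom 1 N :: 'a::comm_ring_1 poly) dvd monom 1 k"
  by (metis dvd_triv_left le_add_diff_inverse mult_1 mult_monom)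

lemma inv_mod:
  fixes v :: "'a::field poly"
  assumes "coeff v 0 \<noteq> 0" "0 < N"
  shows "\<exists>w. monom 1 N dvd (v*w - 1) \<and> coeff w 0 \<noteq> 0"
proof -
  define c where "c = coeff v 0"
  define y where "y = 1 - smult (inverse c) v"
  have "coeff y 0 = 0" using assms(1) by (simp add: y_def c_def)
  hence "monom 1 1 dvd y" by (simp add: monom_1_dvd_iff')
  hence d: "monom 1 N dvd y ^ N" by (metis dvd_power_same monom_power mult_1 power_one)
  define w where "w = smult (inverse c) (\<Sum>i<N. y^i)"
  have "v * w = (1 - y) * (\<Sum>i<N. y^i)" unfolding w_def y_def by (simp add: mult_smult_right mult_smult_left)
  also have "\<dots> = 1 - y^N" by (simp add: one_diff_power_eq)
  finally have vw: "v * w - 1 = - (y ^ N)" by simp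
  have dv: "monom 1 N dvd (v*w - 1)" unfolding vw using d by simp
  hence "coeff (v*w - 1) 0 = 0" using assms(2) by (simp add: monom_1_dvd_iff')
  hence "coeff v 0 * coeff w 0 = 1" by (simp add: coeff_mult)
  hence "coeff w 0 \<noteq> 0" by auto
  with dv show ?thesis by blast
qed


lemma forward:
  fixes n m N p s :: nat
  assumes pr: "prime p" and card: "CARD('a::{finite,field}) = p" and n0: "0<n" and mN: "3*m<N"
    and ms: "m = p^s * n"
  shows "\<exists>\<alpha>::'a poly. [\<alpha>^p * (monom 1 n - monom 1 m) = monom 1 n * monom 1 m * (1 - \<alpha>^(p-1))] (mod monom 1 N)
       \<and> \<not> [\<alpha>^(3*p) = 0] (mod monom 1 N)"
proof (cases s)
  case 0
  hence "m = n" using ms by simp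
  moreover have "\<not> [(1::'a poly) = 0] (mod monom 1 N)"
    using mN by (auto simp: cong_0_iff monom_1_dvd_iff')
  ultimately show ?thesis by (intro exI[of _ 1]) simp
next
  case (Suc r)
  have p2: "p \<ge> 2" using pr prime_ge_2_nat by blast
  have ch: "CHAR('a poly) = p" using char_eq[OF pr card] by simp
  have pp: "prime CHAR('a poly)" using ch pr by simp
  define e where "e = p^r * n"
  have me: "m = p * e" using ms Suc e_def by simp
  have le_e: "p^i * n \<le> e" if "i < s" for i
    using that Suc p2 unfolding e_def by (simp add: power_increasing)
  have le_m: "p^(Suc i) * n \<le> m" if "i < s" for i
    using le_e[OF that] me by simp
  have em: "e \<le> m" using me p2 by simp
  define v :: "'a poly" where "v = (\<Sum>i<s. monom 1 (e - p^i * n))"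
  define f :: "nat \<Rightarrow> 'a poly" where "f i = monom 1 (m + n - p^i * n)" for i
  have "v ^ p = (\<Sum>i<s. monom 1 (e - p^i * n) ^ p)"
    unfolding v_def by (rule freshmans_dream_sum[OF pp ch[symmetric]])
  hence vp: "v ^ p = (\<Sum>i<s. monom 1 ((e - p^i * n) * p))" by (simp add: monom_power)
  have A: "monom 1 n * v ^ p = (\<Sum>i<s. f (Suc i))"
    unfolding vp sum_distrib_left f_def
  proof (rule sum.cong[OF refl])
    fix i assume "i \<in> {..<s}"
    hence "i < s" by simp
    have "n + (e - p^i * n) * p = m + n - p^(Suc i) * n"
    proof -
      have h: "(e - p^i*n)*p = e*p - p^(Suc i)*n" by (simp add: diff_mult_distrib2 diff_mult_distrib mult_ac)
      show ?thesis unfolding h using le_m[OF \<open>i<s\<close>] me by (simp add: mult.commute)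
    qed
    thus "monom 1 n * monom 1 ((e - p ^ i * n) * p) = (monom 1 (m + n - p ^ Suc i * n) :: 'a poly)"
      by (simp add: mult_monom)
  qed
  have B: "monom 1 (m + n - e) * v = (\<Sum>i<s. f i)"
    unfolding v_def sum_distrib_left f_def
  proof (rule sum.cong[OF refl])
    fix i assume "i \<in> {..<s}"
    hence "i < s" by simp
    have "(m + n - e) + (e - p^i * n) = m + n - p^i * n"
      using le_e[OF \<open>i<s\<close>] em by simp
    thus "monom 1 (m + n - e) * monom 1 (e - p ^ i * n) = (monom 1 (m + n - p ^ i * n) :: 'a poly)"
      by (simp add: mult_monom)
  qed
  have Q: "monom 1 n * v ^ p - monom 1 (m + n - e) * v = monom 1 n - monom 1 m"
    unfolding A B sum_subtractf[symmetric] sum_lessThan_telescope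
    using ms by (simp add: f_def)
  have cv: "coeff v 0 = 1"
  proof -
    have "coeff v 0 = (\<Sum>i<Suc r. if e - p^i * n = 0 then 1 else 0)"
      unfolding v_def coeff_sum Suc by (simp add: coeff_monom)
    also have "\<dots> = 1"
    proof -
      have "\<forall>i<r. e - p^i * n \<noteq> 0"
        using p2 n0 unfolding e_def by (auto simp: power_strict_increasing)
      thus ?thesis unfolding e_def by simp
    qed
    finally show ?thesis .
  qed
  obtain w where w: "monom 1 N dvd (v*w - 1)" and w0: "coeff w 0 \<noteq> 0"
    using inv_mod[of v N] cv mN by auto
  define u where "u = v * w"
  have u1: "[u = 1] (mod monom 1 N)" using w unfolding u_def by (simp add: cong_iff_dvd_diff)
  define \<alpha> where "\<alpha> = monom 1 e * w"
  define L where "L = \<alpha>^p * (monom 1 n - monom 1 m)"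
  define R where "R = monom 1 n * monom 1 m * (1 - \<alpha>^(p-1))"
  have ap: "\<alpha>^p = monom 1 m * w^p" unfolding \<alpha>_def by (simp add: power_mult_distrib monom_power me mult.commute)
  have ap1: "\<alpha>^(p-1) = monom 1 (e*(p-1)) * w^(p-1)" unfolding \<alpha>_def by (simp add: power_mult_distrib monom_power)
  have vL: "v^p * L = monom 1 m * u^p * (monom 1 n - monom 1 m)"
    unfolding L_def ap u_def by (simp add: power_mult_distrib mult_ac)
  have vR: "v^p * R = monom 1 n * monom 1 m * (v^p - v * monom 1 (e*(p-1)) * u^(p-1))"
  proof -
    have "v^p = v * v^(p-1)" using p2 by (metis Suc_diff_1 less_le_trans pos2 power_Suc)
    thus ?thesis unfolding R_def ap1 u_def by (simp add: power_mult_distrib algebra_simps)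
  qed
  have e1: "n + e*(p-1) = m + n - e" using me em p2 by (simp add: diff_mult_distrib2 mult.commute)
  have "[v^p * L = monom 1 m * 1 * (monom 1 n - monom 1 m)] (mod monom 1 N)"
    unfolding vL by (intro cong_mult cong_refl cong_pow[of u 1, simplified] u1)
  also have "monom 1 m * 1 * (monom 1 n - monom 1 m) = monom 1 n * monom 1 m * (v^p - v * monom 1 (e*(p-1)) * 1)"
  proof -
    have "monom 1 n * monom 1 m * (v^p - v * monom 1 (e*(p-1)) * 1)
        = monom 1 m * (monom 1 n * v ^ p - monom 1 (m + n - e) * v)"
      by (simp add: algebra_simps mult_monom e1[symmetric])
    thus ?thesis unfolding Q by simp
  qed
  also have "[monom 1 n * monom 1 m * (v^p - v * monom 1 (e*(p-1)) * 1) = v^p * R] (mod monom 1 N)"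
    unfolding vR by (intro cong_mult cong_refl cong_diff cong_sym[OF cong_pow[OF u1, simplified]])
  finally have vLR: "[v^p * L = v^p * R] (mod monom 1 N)" .
  have up1: "[1 = u^p] (mod monom 1 N)" using cong_sym[OF cong_pow[OF u1, of p]] by simp
  have "[L = u^p * L] (mod monom 1 N)" using cong_mult[OF up1 cong_refl[of L]] by simp
  also have "u^p * L = w^p * (v^p * L)" unfolding u_def by (simp add: power_mult_distrib mult_ac)
  also have "[w^p * (v^p * L) = w^p * (v^p * R)] (mod monom 1 N)" by (intro cong_mult cong_refl vLR)
  also have "w^p * (v^p * R) = u^p * R" unfolding u_def by (simp add: power_mult_distrib mult_ac)
  also have "[u^p * R = 1 * R] (mod monom 1 N)" by (intro cong_mult cong_refl cong_sym[OF up1])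
  finally have LR: "[L = R] (mod monom 1 N)" by simp
  have a3: "\<alpha>^(3*p) = monom 1 (3*m) * w^(3*p)" unfolding \<alpha>_def
    by (simp add: power_mult_distrib monom_power me mult_ac)
  have "coeff (\<alpha>^(3*p)) (3*m) \<noteq> 0" unfolding a3 coeff_monom_mult by (simp add: coeff_0_power w0)
  hence "\<not> [\<alpha>^(3*p) = 0] (mod monom 1 N)" using mN by (auto simp: cong_0_iff monom_1_dvd_iff')
  with LR show ?thesis unfolding L_def R_def by blast
qed


lemma backward:
  fixes n m N p :: nat and \<alpha> :: "'a::{finite,field} poly"
  assumes pr: "prime p" and card: "CARD('a) = p" and n0: "0<n" and nm: "n<m" and mN: "3*m<N"
    and E: "[\<alpha>^p * (monom 1 n - monom 1 m) = monom 1 n * monom 1 m * (1 - \<alpha>^(p-1))] (mod monom 1 N)"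
    and nz: "\<not> [\<alpha>^(3*p) = 0] (mod monom 1 N)"
  shows "\<exists>s. m = p^s * n"
proof -
  have p2: "p \<ge> 2" using pr prime_ge_2_nat by blast
  define D where "D = \<alpha>^p * (monom 1 n - monom 1 m) - monom 1 n * monom 1 m * (1 - \<alpha>^(p-1))"
  have dD: "monom 1 N dvd D" using E unfolding D_def by (simp add: cong_iff_dvd_diff)
  have a0: "\<alpha> \<noteq> 0"
  proof
    assume "\<alpha> = 0"
    hence "\<alpha>^(3*p) = 0" using p2 by simp
    thus False using nz by (metis cong_refl)
  qed
  then obtain j0 where "coeff \<alpha> j0 \<noteq> 0" by (meson leading_coeff_0_iff)
  define a where "a = (LEAST j. coeff \<alpha> j \<noteq> 0)"
  have ca: "coeff \<alpha> a \<noteq> 0" unfolding a_def by (rule LeastI) fact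
  have "\<forall>j<a. coeff \<alpha> j = 0" unfolding a_def using not_less_Least by blast
  hence "monom 1 a dvd \<alpha>" by (simp add: monom_1_dvd_iff')
  then obtain u where au: "\<alpha> = monom 1 a * u" by (elim dvdE)
  have u0: "coeff u 0 \<noteq> 0" using ca unfolding au coeff_monom_mult by simp
  have a3: "3*p*a < N"
  proof (rule ccontr)
    assume "\<not> 3*p*a < N"
    hence "monom 1 N dvd (monom 1 (a*(3*p)) :: 'a poly)" by (intro monom_dvd) (simp add: mult_ac)
    hence "monom 1 N dvd \<alpha>^(3*p)" unfolding au by (simp add: power_mult_distrib monom_power)
    thus False using nz by (simp add: cong_0_iff)
  qed
  have cD: "coeff D j = 0" if "j < N" for j using dD that by (simp add: monom_1_dvd_iff')
  have apos: "a > 0"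
  proof (rule ccontr)
    assume "\<not> a > 0"
    hence "a = 0" by simp
    have "D = monom 1 n * \<alpha>^p - monom 1 m * \<alpha>^p - monom 1 (n+m) * (1 - \<alpha>^(p-1))"
      unfolding D_def by (simp add: algebra_simps mult_monom)
    hence "coeff D n = coeff \<alpha> 0 ^ p"
      using nm by (simp add: coeff_monom_mult coeff_0_power)
    moreover have "coeff D n = 0" using cD nm mN by simp
    ultimately show False using ca \<open>a = 0\<close> by simp
  qed
  obtain w where w: "monom 1 N dvd (u*w - 1)" and w0: "coeff w 0 \<noteq> 0"
    using inv_mod[of u N] u0 mN by auto
  define z where "z = u * w"
  have z1: "[z = 1] (mod monom 1 N)" using w unfolding z_def by (simp add: cong_iff_dvd_diff)
  define K where "K = monom 1 (a*p+n) - monom 1 (a*p+m) - monom 1 (n+m) * w^p + monom 1 (n+m+a*(p-1)) * w"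
  have wD: "w^p * D = monom 1 (a*p) * z^p * (monom 1 n - monom 1 m)
      - monom 1 n * monom 1 m * (w^p - monom 1 (a*(p-1)) * z^(p-1) * w)"
  proof -
    have "w^p = w * w^(p-1)" using p2 by (metis Suc_diff_1 less_le_trans pos2 power_Suc)
    thus ?thesis unfolding D_def au z_def by (simp add: power_mult_distrib monom_power algebra_simps)
  qed
  have "[w^p * D = monom 1 (a*p) * 1 * (monom 1 n - monom 1 m)
      - monom 1 n * monom 1 m * (w^p - monom 1 (a*(p-1)) * 1 * w)] (mod monom 1 N)"
    unfolding wD by (intro cong_mult cong_refl cong_diff cong_pow[of z 1, simplified] z1)
  moreover have "monom 1 (a*p) * 1 * (monom 1 n - monom 1 m)
      - monom 1 n * monom 1 m * (w^p - monom 1 (a*(p-1)) * 1 * w) = K"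
    unfolding K_def by (simp add: algebra_simps mult_monom)
  moreover have "[w^p * D = 0] (mod monom 1 N)" using dD by (simp add: cong_0_iff)
  ultimately have "[K = 0] (mod monom 1 N)" by (metis cong_sym cong_trans)
  hence cK: "coeff K j = 0" if "j < N" for j using that by (simp add: cong_0_iff monom_1_dvd_iff')
  have cKj: "coeff K j = (if j = a*p+n then 1 else 0) - (if j = a*p+m then 1 else 0)
      - (if n+m \<le> j then coeff (w^p) (j-(n+m)) else 0)
      + (if n+m+a*(p-1) \<le> j then coeff w (j - (n+m+a*(p-1))) else 0)" for j
    unfolding K_def by (simp add: coeff_monom coeff_monom_mult)
  have frob: "coeff (w ^ p) j = (if p dvd j then coeff w (j div p) else 0)" for j
    by (rule frob_coeff[OF pr card])
  have ma: "m = a*p"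
  proof (rule ccontr)
    assume "m \<noteq> a*p"
    then consider "a*p < m" | "a*p > m" by linarith
    thus False
    proof cases
      case 1
      have "coeff K (a*p+n) = 1" unfolding cKj using 1 nm by auto
      moreover have "a*p+n < N" using 1 mN nm by linarith
      ultimately show False using cK by simp
    next
      case 2
      have "a*(p-1) > 0" using apos p2 by simp
      hence "coeff K (n+m) = - (coeff w 0 ^ p)" unfolding cKj using 2 nm
        by (simp add: frob_coeff[OF pr card] coeff_0_power)
      moreover have "n+m < N" using nm mN by simp
      ultimately show False using cK w0 by simp
    qed
  qed
  have am: "a < m" using ma apos p2 by simp
  have am2: "a*(p-1) = m - a" using ma by (simp add: diff_mult_distrib2)
  have w01: "coeff w 0 = 1"
  proof -
    have h1: "\<not> (n+m+a*(p-1) \<le> n+m)" using am2 am by simp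
    have h2: "n + m = a*p+n" "n + m \<noteq> a*p+m" using ma nm apos n0 by auto
    have "coeff K (n+m) = 1 - coeff w 0"
      unfolding cKj using h1 h2 ma by (simp add: frob)
    moreover have "n+m < N" using nm mN by simp
    ultimately show ?thesis using cK by simp
  qed
  have key: "coeff w (a-k) = (if k = n then 1 else 0) + (if p dvd k then coeff w (a - k div p) else 0)"
    if k1: "1 \<le> k" and ka: "k \<le> a" for k
  proof -
    define j where "j = n + m + (m - k)"
    have jN: "j < N" unfolding j_def using mN nm by simp
    have km: "k < m" using am ka by simp
    have d1: "\<not> (j = a*p+n)" unfolding j_def using ma km by simp
    have d2: "(j = a*p+m) = (k = n)" unfolding j_def using ma km nm by auto
    have d3: "j - (n+m) = m - k" unfolding j_def by simp
    have d4: "n+m+a*(p-1) \<le> j \<and> j - (n+m+a*(p-1)) = a - k" unfolding j_def using am2 ka am by auto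
    have d5: "coeff (w^p) (m-k) = (if p dvd k then coeff w (a - k div p) else 0)"
    proof (cases "p dvd k")
      case True
      then obtain q where q: "k = p*q" by (elim dvdE)
      have "m - k = p*(a-q)" using ma q by (simp add: diff_mult_distrib2 mult.commute)
      thus ?thesis using True q p2 by (simp add: frob)
    next
      case False
      have "\<not> p dvd (m - k)"
      proof
        assume "p dvd (m-k)"
        moreover have "p dvd m" using ma by simp
        ultimately have "p dvd m - (m-k)" by (simp add: dvd_diff_nat)
        thus False using False ka am by simp
      qed
      thus ?thesis using False by (simp add: frob)
    qed
    have "coeff K j = 0" using cK jN by simp
    hence "0 - (if k = n then 1 else 0) - (if p dvd k then coeff w (a - k div p) else 0) + coeff w (a-k) = (0::'a)"
      unfolding cKj d2 d3 d5 using d4 d1 by simp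
    thus ?thesis by (simp add: algebra_simps split: if_splits)
  qed
  have claim: "\<forall>k. 1 \<le> k \<longrightarrow> k \<le> a \<longrightarrow> coeff w (a-k) = 1 \<longrightarrow> (\<exists>i. k = p^i*n)" 
  proof (intro allI)
    fix k show "1 \<le> k \<longrightarrow> k \<le> a \<longrightarrow> coeff w (a-k) = 1 \<longrightarrow> (\<exists>i. k = p^i*n)"
    proof (induction k rule: less_induct)
      case (less k)
      show ?case
      proof (intro impI)
        assume k1: "1 \<le> k" and ka: "k \<le> a" and c1: "coeff w (a-k) = 1"
        show "\<exists>i. k = p^i*n"
        proof (cases "k = n")
          case True thus ?thesis by (intro exI[of _ 0]) simp
        next
          case False
          have eq: "coeff w (a-k) = (if p dvd k then coeff w (a - k div p) else 0)"
            using key[OF k1 ka] False by simp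
          have pk: "p dvd k" using eq c1 by (auto split: if_splits)
          then obtain q where q: "k = p*q" by (elim dvdE)
          have q1: "1 \<le> q" using q k1 by (cases q) auto
          have qk: "q < k" using q q1 p2 by simp
          have cq: "coeff w (a - q) = 1" using eq c1 pk q p2 by simp
          obtain i where "q = p^i*n" using less.IH[OF qk] q1 qk ka cq by auto
          thus ?thesis using q by (intro exI[of _ "Suc i"]) simp
        qed
      qed
    qed
  qed
  obtain i where "a = p^i*n" using claim apos w01 by fastforce
  thus ?thesis using ma by (intro exI[of _ "Suc i"]) (simp add: mult_ac)
qed


theorem mainTheorem6:
  fixes p n m N :: nat
  assumes "prime p"
    and "CARD('a) = p"
    and "0 < n" and "n \<le> m" and "3 * m < N"
  shows "pdvd p n m \<longleftrightarrow>
    (\<exists>\<alpha> :: 'a::{finite,field} poly.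
       eq_mod_tN N (\<alpha> ^ p * ([:0, 1:] ^ n - [:0, 1:] ^ m))
                   ([:0, 1:] ^ n * [:0, 1:] ^ m * (1 - \<alpha> ^ (p - 1)))
     \<and> \<not> eq_mod_tN N (\<alpha> ^ (3 * p)) 0)"
  unfolding X_pow eqmod_cong pdvd_def
proof
  assume "\<exists>s. m = p ^ s * n"
  then obtain s where "m = p^s*n" by blast
  thus "\<exists>\<alpha> :: 'a poly. [\<alpha> ^ p * (monom 1 n - monom 1 m) = monom 1 n * monom 1 m * (1 - \<alpha> ^ (p - 1))] (mod monom 1 N)
     \<and> \<not> [\<alpha> ^ (3 * p) = 0] (mod monom 1 N)"
    using forward[OF assms(1,2,3,5)] by blast
next
  assume h: "\<exists>\<alpha> :: 'a poly. [\<alpha> ^ p * (monom 1 n - monom 1 m) = monom 1 n * monom 1 m * (1 - \<alpha> ^ (p - 1))] (mod monom 1 N)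
     \<and> \<not> [\<alpha> ^ (3 * p) = 0] (mod monom 1 N)"
  show "\<exists>s. m = p ^ s * n"
  proof (cases "n = m")
    case True thus ?thesis by (intro exI[of _ 0]) simp
  next
    case False
    hence "n < m" using assms(4) by simp
    thus ?thesis using h backward[OF assms(1,2,3) _ assms(5)] by blast
  qed
qed

end
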